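(* Let $(A=A_0\oplus A_1,\cdot,\alpha)$ be a super anticommutative Hom-superalgebra. Then for all homogeneous $w,x,y,z\in A$: (i) $\tilde{J}_A$ is super skew-symmetric: $\tilde{J}_A(x,y,z)=-(-1)^{\bar{x}\bar{y}}\tilde{J}_A(y,x,z)=-(-1)^{\bar{y}\bar{z}}\tilde{J}_A(x,z,y)=-(-1)^{\bar{x}(\bar{y}+\bar{z})+\bar{y}\bar{z}}\tilde{J}_A(z,y,x)$; (ii) \begin{align*} &\alpha^2(w)\tilde{J}_A(x,y,z)-(-1)^{\bar{w}(\bar{x}+\bar{y}+\bar{z})}\alpha^2(x)\tilde{J}_A(y,z,w)+(-1)^{(\bar{y}+\bar{z})(\bar{w}+\bar{x})}\alpha^2(y)\tilde{J}_A(z,w,x)-(-1)^{\bar{z}(\bar{x}+\bar{y}+\bar{w})}\alpha^2(z)\tilde{J}_A(w,x,y)\\ &=\tilde{J}_A(wx,\alpha(y),\alpha(z))+(-1)^{(\bar{y}+\bar{z})(\bar{x}+\bar{w})}\tilde{J}_A(yz,\alpha(w),\alpha(x))+(-1)^{\bar{x}(\bar{y}+\bar{z})}\tilde{J}_A(wy,\alpha(z),\alpha(x))\\ &\quad+(-1)^{\bar{z}(\bar{x}+\bar{y})+\bar{w}(\bar{x}+\bar{z})}\tilde{J}_A(zx,\alpha(w),\alpha(y))-(-1)^{\bar{z}(\bar{x}+\bar{y}+\bar{w})}\tilde{J}_A(zw,\alpha(x),\alpha(y))-(-1)^{\bar{w}(\bar{x}+\bar{y}+\bar{z})}\tilde{J}_A(xy,\alpha(z),\alpha(w)).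 \end{align*}
   Context: $\mathbb{K}$ is an algebraically closed field of characteristic $0$. A superspace is a $\mathbb{Z}_2$-graded vector space $A=A_0\oplus A_1$; the parity of a homogeneous $x$ is written $\bar{x}$. A Hom-superalgebra $(A,\cdot,\alpha)$ consists of a superspace $A$, an even bilinear product $(x,y)\mapsto xy$, and an even linear map $\alpha$ with $\alpha(xy)=\alpha(x)\alpha(y)$. It is super anticommutative if $xy=-(-1)^{\bar{x}\bar{y}}yx$ for homogeneous $x,y$. The Hom-super-Jacobian is $\tilde{J}_A(x,y,z)=(xy)\alpha(z)+(-1)^{\bar{x}(\bar{y}+\bar{z})}(yz)\alpha(x)+(-1)^{\bar{z}(\bar{x}+\bar{y})}(zx)\alpha(y)$. *)

theory Defs
  imports "HOL-Computational_Algebra.Polynomial"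
begin

text \<open>Superspace A = A0 \<oplus> A1 over a field, with scalar multiplication sc.
  Parities are natural numbers; only their residue mod 2 matters.\<close>

definition superspace :: "('k::field \<Rightarrow> 'v::ab_group_add \<Rightarrow> 'v) \<Rightarrow> 'v set \<Rightarrow> 'v set \<Rightarrow> bool" where
  "superspace sc A0 A1 \<longleftrightarrow> vector_space sc \<and> module.subspace sc A0 \<and> module.subspace sc A1
     \<and> A0 \<inter> A1 = {0} \<and> (\<forall>v. \<exists>a\<in>A0. \<exists>b\<in>A1. v = a + b)"

definition grade :: "'v set \<Rightarrow> 'v set \<Rightarrow> nat \<Rightarrow> 'v set" where
  "grade A0 A1 p = (if even p then A0 else A1)"

definition sgnv :: "nat \<Rightarrow> 'v::ab_group_add \<Rightarrow> 'v" where
  "sgnv n v = (if even n then v else - v)"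

definition hom_superalgebra ::
  "('k::field \<Rightarrow> 'v::ab_group_add \<Rightarrow> 'v) \<Rightarrow> 'v set \<Rightarrow> 'v set \<Rightarrow> ('v \<Rightarrow> 'v \<Rightarrow> 'v) \<Rightarrow> ('v \<Rightarrow> 'v) \<Rightarrow> bool" where
  "hom_superalgebra sc A0 A1 mul \<alpha> \<longleftrightarrow>
     superspace sc A0 A1
     \<and> (\<forall>x. Vector_Spaces.linear sc sc (mul x))
     \<and> (\<forall>y. Vector_Spaces.linear sc sc (\<lambda>x. mul x y))
     \<and> (\<forall>p q x y. x \<in> grade A0 A1 p \<longrightarrow> y \<in> grade A0 A1 q \<longrightarrow> mul x y \<in> grade A0 A1 (p + q))
     \<and> Vector_Spaces.linear sc sc \<alpha>
     \<and> (\<forall>p x. x \<in> grade A0 A1 p \<longrightarrow> \<alpha> x \<in> grade A0 A1 p)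
     \<and> (\<forall>x y. \<alpha> (mul x y) = mul (\<alpha> x) (\<alpha> y))"

definition super_anticommutative ::
  "'v set \<Rightarrow> 'v set \<Rightarrow> ('v::ab_group_add \<Rightarrow> 'v \<Rightarrow> 'v) \<Rightarrow> bool" where
  "super_anticommutative A0 A1 mul \<longleftrightarrow>
     (\<forall>p q x y. x \<in> grade A0 A1 p \<longrightarrow> y \<in> grade A0 A1 q \<longrightarrow>
        mul x y = - sgnv (p * q) (mul y x))"

definition hom_super_jacobian ::
  "('v::ab_group_add \<Rightarrow> 'v \<Rightarrow> 'v) \<Rightarrow> ('v \<Rightarrow> 'v) \<Rightarrow> 'v \<Rightarrow> nat \<Rightarrow> 'v \<Rightarrow> nat \<Rightarrow> 'v \<Rightarrow> nat \<Rightarrow> 'v" where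
  "hom_super_jacobian mul \<alpha> x px y py z pz =
     mul (mul x y) (\<alpha> z)
     + sgnv (px * (py + pz)) (mul (mul y z) (\<alpha> x))
     + sgnv (pz * (px + py)) (mul (mul z x) (\<alpha> y))"

end

theory Submission
  imports Defs
begin

lemma sgnv_simps:
  "sgnv n (a + b) = sgnv n a + sgnv n b"
  "sgnv n (a - b) = sgnv n a - sgnv n b"
  "sgnv n (- a) = - sgnv n a"
  "sgnv n (sgnv m a) = sgnv (n + m) a"
  by (auto simp: sgnv_def)

theorem lemma2p5:
  fixes sc :: "'k::{alg_closed_field, field_char_0} \<Rightarrow> 'v::ab_group_add \<Rightarrow> 'v"
    and A0 A1 :: "'v set" and mul :: "'v \<Rightarrow> 'v \<Rightarrow> 'v" and \<alpha> :: "'v \<Rightarrow> 'v"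
    and w x y z :: 'v and pw px py pz :: nat
  assumes "hom_superalgebra sc A0 A1 mul \<alpha>"
    and "super_anticommutative A0 A1 mul"
    and "pw < 2" "px < 2" "py < 2" "pz < 2"
    and "w \<in> grade A0 A1 pw" "x \<in> grade A0 A1 px"
    and "y \<in> grade A0 A1 py" "z \<in> grade A0 A1 pz"
  defines "J \<equiv> hom_super_jacobian mul \<alpha>"
  shows "(J x px y py z pz = - sgnv (px * py) (J y py x px z pz)
       \<and> J x px y py z pz = - sgnv (py * pz) (J x px z pz y py)
       \<and> J x px y py z pz = - sgnv (px * (py + pz) + py * pz) (J z pz y py x px))
     \<and> (mul (\<alpha> (\<alpha> w)) (J x px y py z pz)
         - sgnv (pw * (px + py + pz)) (mul (\<alpha> (\<alpha> x)) (J y py z pz w pw))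
         + sgnv ((py + pz) * (pw + px)) (mul (\<alpha> (\<alpha> y)) (J z pz w pw x px))
         - sgnv (pz * (px + py + pw)) (mul (\<alpha> (\<alpha> z)) (J w pw x px y py))
       = J (mul w x) (pw + px) (\<alpha> y) py (\<alpha> z) pz
         + sgnv ((py + pz) * (px + pw)) (J (mul y z) (py + pz) (\<alpha> w) pw (\<alpha> x) px)
         + sgnv (px * (py + pz)) (J (mul w y) (pw + py) (\<alpha> z) pz (\<alpha> x) px)
         + sgnv (pz * (px + py) + pw * (px + pz)) (J (mul z x) (pz + px) (\<alpha> w) pw (\<alpha> y) py)
         - sgnv (pz * (px + py + pw)) (J (mul z w) (pz + pw) (\<alpha> x) px (\<alpha> y) py)
         - sgnv (pw * (px + py + pz)) (J (mul x y) (px + py) (\<alpha> z) pz (\<alpha> w) pw))"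
proof -
  have H: "hom_superalgebra sc A0 A1 mul \<alpha>" by fact
  have ml: "module_hom sc sc (mul a)" for a
    using H by (simp add: hom_superalgebra_def linear_iff_module_hom)
  have mr: "module_hom sc sc (\<lambda>b. mul b a)" for a
    using H by (simp add: hom_superalgebra_def linear_iff_module_hom)
  have al: "module_hom sc sc \<alpha>"
    using H by (simp add: hom_superalgebra_def linear_iff_module_hom)
  have mulL: "mul a (b + c) = mul a b + mul a c" "mul a (- b) = - mul a b" "mul a (b - c) = mul a b - mul a c" for a b c
    using module_hom.add[OF ml] module_hom.neg[OF ml] module_hom.diff[OF ml] by auto
  have mulR: "mul (b + c) a = mul b a + mul c a" "mul (- b) a = - mul b a" "mul (b - c) a = mul b a - mul c a" for a b c
    using module_hom.add[OF mr] module_hom.neg[OF mr] module_hom.diff[OF mr] by simp_all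
  have alL: "\<alpha> (b + c) = \<alpha> b + \<alpha> c" "\<alpha> (- b) = - \<alpha> b" "\<alpha> (b - c) = \<alpha> b - \<alpha> c" for b c
    using module_hom.add[OF al] module_hom.neg[OF al] module_hom.diff[OF al] by auto
  have sg: "mul a (sgnv n b) = sgnv n (mul a b)" "mul (sgnv n b) a = sgnv n (mul b a)" "\<alpha> (sgnv n b) = sgnv n (\<alpha> b)" for a b n
    by (auto simp: sgnv_def mulL mulR alL)
  have amul: "\<alpha> (mul a b) = mul (\<alpha> a) (\<alpha> b)" for a b
    using H by (simp add: hom_superalgebra_def)
  have gmul: "a \<in> grade A0 A1 p \<Longrightarrow> b \<in> grade A0 A1 q \<Longrightarrow> mul a b \<in> grade A0 A1 (p + q)" for a b p q
    using H by (simp add: hom_superalgebra_def)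
  have galpha: "a \<in> grade A0 A1 p \<Longrightarrow> \<alpha> a \<in> grade A0 A1 p" for a p
    using H by (simp add: hom_superalgebra_def)
  have ac: "a \<in> grade A0 A1 p \<Longrightarrow> b \<in> grade A0 A1 q \<Longrightarrow> mul a b = - sgnv (p * q) (mul b a)" for a b p q
    using assms(2) unfolding super_anticommutative_def by blast
  have g_w: "w \<in> grade A0 A1 (pw)" by (intro gmul galpha assms)
  have ga_w: "\<alpha> w \<in> grade A0 A1 (pw)" by (intro gmul galpha assms)
  have gaa_w: "\<alpha> (\<alpha> w) \<in> grade A0 A1 (pw)" by (intro gmul galpha assms)
  have g_x: "x \<in> grade A0 A1 (px)" by (intro gmul galpha assms)
  have ga_x: "\<alpha> x \<in> grade A0 A1 (px)" by (intro gmul galpha assms)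
  have gaa_x: "\<alpha> (\<alpha> x) \<in> grade A0 A1 (px)" by (intro gmul galpha assms)
  have g_y: "y \<in> grade A0 A1 (py)" by (intro gmul galpha assms)
  have ga_y: "\<alpha> y \<in> grade A0 A1 (py)" by (intro gmul galpha assms)
  have gaa_y: "\<alpha> (\<alpha> y) \<in> grade A0 A1 (py)" by (intro gmul galpha assms)
  have g_z: "z \<in> grade A0 A1 (pz)" by (intro gmul galpha assms)
  have ga_z: "\<alpha> z \<in> grade A0 A1 (pz)" by (intro gmul galpha assms)
  have gaa_z: "\<alpha> (\<alpha> z) \<in> grade A0 A1 (pz)" by (intro gmul galpha assms)
  have gm_wx: "mul w x \<in> grade A0 A1 (pw+px)" by (intro gmul galpha assms)
  have gma_wx: "mul (\<alpha> w) (\<alpha> x) \<in> grade A0 A1 (pw+px)" by (intro gmul galpha assms)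
  have g3_wxy: "mul (mul w x) (\<alpha> y) \<in> grade A0 A1 (pw+px+py)" by (intro gmul galpha assms)
  have g3_wxz: "mul (mul w x) (\<alpha> z) \<in> grade A0 A1 (pw+px+pz)" by (intro gmul galpha assms)
  have gm_wy: "mul w y \<in> grade A0 A1 (pw+py)" by (intro gmul galpha assms)
  have gma_wy: "mul (\<alpha> w) (\<alpha> y) \<in> grade A0 A1 (pw+py)" by (intro gmul galpha assms)
  have g3_wyx: "mul (mul w y) (\<alpha> x) \<in> grade A0 A1 (pw+py+px)" by (intro gmul galpha assms)
  have g3_wyz: "mul (mul w y) (\<alpha> z) \<in> grade A0 A1 (pw+py+pz)" by (intro gmul galpha assms)
  have gm_wz: "mul w z \<in> grade A0 A1 (pw+pz)" by (intro gmul galpha assms)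
  have gma_wz: "mul (\<alpha> w) (\<alpha> z) \<in> grade A0 A1 (pw+pz)" by (intro gmul galpha assms)
  have g3_wzx: "mul (mul w z) (\<alpha> x) \<in> grade A0 A1 (pw+pz+px)" by (intro gmul galpha assms)
  have g3_wzy: "mul (mul w z) (\<alpha> y) \<in> grade A0 A1 (pw+pz+py)" by (intro gmul galpha assms)
  have gm_xy: "mul x y \<in> grade A0 A1 (px+py)" by (intro gmul galpha assms)
  have gma_xy: "mul (\<alpha> x) (\<alpha> y) \<in> grade A0 A1 (px+py)" by (intro gmul galpha assms)
  have g3_xyw: "mul (mul x y) (\<alpha> w) \<in> grade A0 A1 (px+py+pw)" by (intro gmul galpha assms)
  have g3_xyz: "mul (mul x y) (\<alpha> z) \<in> grade A0 A1 (px+py+pz)" by (intro gmul galpha assms)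
  have gm_xz: "mul x z \<in> grade A0 A1 (px+pz)" by (intro gmul galpha assms)
  have gma_xz: "mul (\<alpha> x) (\<alpha> z) \<in> grade A0 A1 (px+pz)" by (intro gmul galpha assms)
  have g3_xzw: "mul (mul x z) (\<alpha> w) \<in> grade A0 A1 (px+pz+pw)" by (intro gmul galpha assms)
  have g3_xzy: "mul (mul x z) (\<alpha> y) \<in> grade A0 A1 (px+pz+py)" by (intro gmul galpha assms)
  have gm_yz: "mul y z \<in> grade A0 A1 (py+pz)" by (intro gmul galpha assms)
  have gma_yz: "mul (\<alpha> y) (\<alpha> z) \<in> grade A0 A1 (py+pz)" by (intro gmul galpha assms)
  have g3_yzw: "mul (mul y z) (\<alpha> w) \<in> grade A0 A1 (py+pz+pw)" by (intro gmul galpha assms)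
  have g3_yzx: "mul (mul y z) (\<alpha> x) \<in> grade A0 A1 (py+pz+px)" by (intro gmul galpha assms)
  note R = ac[OF g_x g_w] ac[OF ga_x ga_w] ac[OF ga_y gm_wx] ac[OF gaa_z g3_wxy] ac[OF ga_z gm_wx] ac[OF gaa_y g3_wxz] ac[OF g_y g_w] ac[OF ga_y ga_w] ac[OF ga_x gm_wy] ac[OF gaa_z g3_wyx] ac[OF ga_z gm_wy] ac[OF gaa_x g3_wyz] ac[OF g_z g_w] ac[OF ga_z ga_w] ac[OF ga_x gm_wz] ac[OF gaa_y g3_wzx] ac[OF ga_y gm_wz] ac[OF gaa_x g3_wzy] ac[OF g_y g_x] ac[OF ga_y ga_x] ac[OF ga_w gm_xy] ac[OF gaa_z g3_xyw] ac[OF ga_z gm_xy] ac[OF gaa_w g3_xyz] ac[OF g_z g_x] ac[OF ga_z ga_x] ac[OF ga_w gm_xz] ac[OF gaa_y g3_xzw] ac[OF ga_y gm_xz] ac[OF gaa_w g3_xzy] ac[OF g_z g_y] ac[OF ga_z ga_y] ac[OF ga_w gm_yz] ac[OF gaa_x g3_yzw] ac[OF ga_x gm_yz] ac[OF gaa_w g3_yzx] ac[OF gma_yz gma_wx] ac[OF gma_xz gma_wy] ac[OF gma_xy gma_wz]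
  show ?thesis
    unfolding J_def hom_super_jacobian_def
    apply (simp only: mulL mulR alL sg amul sgnv_simps R)
    using assms(3-6)
    apply (simp add: less_2_cases_iff)
    apply (elim disjE)
    apply (simp_all add: sgnv_def algebra_simps)
    done
qed

end
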